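(* Let $n,r,d$ be positive integers and let $S$ be a set of $n$ points in $\mathbb{R}^d$. Assign to each point of $S$ a label from $\{1,\dots,r\}$, uniformly and independently, and let $P$ be the resulting random partition of $S$ (the parts being the nonempty label classes). Then the probability that $P$ is a Tverberg partition of $S$ into $r$ parts whose degree in $G_T[S,r]$ equals $n(r-1)$ is at least \[1-r^{(r-1)(d+1)}\,n^{(r-1)(d+1)}\exp\!\left(\frac{-2(n-r)^2}{nr^2}\right).\]
   Context: A partition of a finite set $S$ into $r$ parts is a collection of $r$ nonempty pairwise disjoint subsets $P_1,\dots,P_r$ (unordered) whose union is $S$. For a finite $S\subset\mathbb{R}^d$, a Tverberg partition of $S$ into $r$ parts is a partition $P_1,\dots,P_r$ of $S$ into $r$ parts with $\bigcap_{j=1}^r\operatorname{conv}(P_j)\neq\emptyset$. For two partitions $P,P'$ of $S$, the partition distance $D(P,P')$ is the minimum number of elements of $S$ that must be removed so that $P$ and $P'$ restricted to the remaining elements coincide. The Tverberg $r$-partition graph $G_T[S,r]$ has as vertices all Tverberg partitions of $S$ into $r$ parts, with an edge between $P$ and $P'$ if and only if $D(P,P')=1$. *)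

theory Defs
  imports "HOL-Analysis.Analysis"
begin

definition is_partition :: "'a set \<Rightarrow> nat \<Rightarrow> 'a set set \<Rightarrow> bool" where
  "is_partition S r P \<longleftrightarrow> (\<forall>B\<in>P. B \<noteq> {} \<and> B \<subseteq> S) \<and> \<Union>P = S \<and>
     (\<forall>B\<in>P. \<forall>C\<in>P. B \<noteq> C \<longrightarrow> B \<inter> C = {}) \<and> finite P \<and> card P = r"

definition tverberg_partition :: "('a::real_vector) set \<Rightarrow> nat \<Rightarrow> 'a set set \<Rightarrow> bool" where
  "tverberg_partition S r P \<longleftrightarrow> is_partition S r P \<and> (\<Inter>B\<in>P. convex hull B) \<noteq> {}"

definition restrict_partition :: "'a set set \<Rightarrow> 'a set \<Rightarrow> 'a set set" where
  "restrict_partition P T = ((\<lambda>B. B \<inter> T) ` P) - {{}}"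

definition partition_dist :: "'a set \<Rightarrow> 'a set set \<Rightarrow> 'a set set \<Rightarrow> nat" where
  "partition_dist S P P' = (LEAST k. \<exists>R. R \<subseteq> S \<and> card R = k \<and>
       restrict_partition P (S - R) = restrict_partition P' (S - R))"

text \<open>Degree of P in the Tverberg r-partition graph G_T[S,r].\<close>
definition tverberg_degree :: "('a::real_vector) set \<Rightarrow> nat \<Rightarrow> 'a set set \<Rightarrow> nat" where
  "tverberg_degree S r P = card {P'. tverberg_partition S r P' \<and> partition_dist S P P' = 1}"

definition label_partition :: "'a set \<Rightarrow> nat \<Rightarrow> ('a \<Rightarrow> nat) \<Rightarrow> 'a set set" where
  "label_partition S r f = (\<lambda>i. {x\<in>S. f x = i}) ` {1..r} - {{}}"

end

theory Submission
  imports Defs "HOL-Probability.Probability"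
begin

abbreviation cls :: "'a set \<Rightarrow> ('a \<Rightarrow> nat) \<Rightarrow> nat \<Rightarrow> 'a set" where
  "cls S f j \<equiv> {x\<in>S. f x = j}"

lemma LP_image:
  assumes "\<forall>j\<in>{1..r}. cls S f j \<noteq> {}"
  shows "label_partition S r f = (\<lambda>j. cls S f j) ` {1..r}"
  using assms unfolding label_partition_def by auto

lemma LP_inj:
  assumes "\<forall>j\<in>{1..r}. cls S f j \<noteq> {}"
  shows "inj_on (\<lambda>j. cls S f j) {1..r}"
proof (rule inj_onI)
  fix i j assume i: "i \<in> {1..r}" and j: "j \<in> {1..r}" and e: "cls S f i = cls S f j"
  from assms i obtain x where "x \<in> cls S f i" by blast
  with e show "i = j" by auto
qed

lemma LP_card:
  assumes "\<forall>j\<in>{1..r}. cls S f j \<noteq> {}"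
  shows "card (label_partition S r f) = r"
  using LP_image[OF assms] card_image[OF LP_inj[OF assms]] by simp

lemma LP_is_partition:
  assumes "\<forall>x\<in>S. f x \<in> {1..r}" "\<forall>j\<in>{1..r}. cls S f j \<noteq> {}"
  shows "is_partition S r (label_partition S r f)"
  unfolding is_partition_def
proof (intro conjI)
  show "\<forall>B\<in>label_partition S r f. B \<noteq> {} \<and> B \<subseteq> S"
    unfolding label_partition_def by auto
  show "\<Union> (label_partition S r f) = S"
    using assms(1) unfolding LP_image[OF assms(2)] by auto
  show "\<forall>B\<in>label_partition S r f. \<forall>C\<in>label_partition S r f. B \<noteq> C \<longrightarrow> B \<inter> C = {}"
    unfolding label_partition_def by auto
  show "finite (label_partition S r f)" unfolding label_partition_def by simp
  show "card (label_partition S r f) = r" by (rule LP_card[OF assms(2)])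
qed

lemma LP_block:
  assumes "label_partition S r g = label_partition S r g'" "x \<in> S"
    "\<forall>x\<in>S. g x \<in> {1..r}" "\<forall>x\<in>S. g' x \<in> {1..r}"
  shows "cls S g (g x) = cls S g' (g' x)"
proof -
  have "cls S g (g x) \<in> label_partition S r g"
    unfolding label_partition_def using assms(2,3)
    by (intro DiffI rev_image_eqI[of "g x"]) auto
  then have "cls S g (g x) \<in> label_partition S r g'" using assms(1) by simp
  then obtain j where ej: "cls S g (g x) = cls S g' j"
    unfolding label_partition_def by auto
  have "x \<in> cls S g' j" by (subst ej[symmetric]) (simp add: assms(2))
  then have "j = g' x" by simp
  with ej show ?thesis by simp
qed

lemma restrict_LP:
  assumes "T \<subseteq> S"
  shows "restrict_partition (label_partition S r f) T = label_partition T r f"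
proof -
  have e: "\<And>i. cls S f i \<inter> T = cls T f i" using assms by auto
  have "(\<lambda>B. B \<inter> T) ` ((\<lambda>i. cls S f i) ` {1..r} - {{}}) - {{}}
      = (\<lambda>B. B \<inter> T) ` ((\<lambda>i. cls S f i) ` {1..r}) - {{}}" by auto
  also have "\<dots> = (\<lambda>i. cls T f i) ` {1..r} - {{}}" using e by (simp add: image_image)
  finally show ?thesis unfolding restrict_partition_def label_partition_def .
qed

lemma LP_cong:
  assumes "\<forall>x\<in>T. f x = g x"
  shows "label_partition T r f = label_partition T r g"
proof -
  have "\<And>i. {x\<in>T. f x = i} = {x\<in>T. g x = i}" using assms by auto
  then show ?thesis unfolding label_partition_def by simp
qed

lemma infdist_closest:
  fixes K :: "'a::euclidean_space set"
  assumes "closed K" "K \<noteq> {}"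
  shows "infdist c K = dist c (closest_point K c)"
proof -
  obtain y where y: "y \<in> K" "infdist c K = dist c y" using infdist_attains_inf[OF assms] by blast
  have "dist c (closest_point K c) \<le> dist c y" using closest_point_le[OF assms(1) y(1)] .
  moreover have "infdist c K \<le> dist c (closest_point K c)"
    using infdist_le closest_point_in_set[OF assms] by blast
  ultimately show ?thesis using y by simp
qed

lemma sum_sq_identity:
  fixes y :: "nat \<Rightarrow> 'a::real_inner"
  assumes "finite I" "m = (1 / real (card I)) *\<^sub>R (\<Sum>j\<in>I. y j)" "I \<noteq> {}"
  shows "(\<Sum>j\<in>I. (c - y j) \<bullet> (c - y j)) = (\<Sum>j\<in>I. (m - y j) \<bullet> (m - y j)) + real (card I) * ((c - m) \<bullet> (c - m))"
proof -
  have sm: "(\<Sum>j\<in>I. (m - y j)) = 0"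
  proof -
    have "(\<Sum>j\<in>I. (m - y j)) = real (card I) *\<^sub>R m - (\<Sum>j\<in>I. y j)"
      by (simp add: sum_subtractf sum_constant_scaleR)
    also have "real (card I) *\<^sub>R m = (\<Sum>j\<in>I. y j)" using assms by (simp add: card_gt_0_iff)
    finally show ?thesis by simp
  qed
  have e: "\<And>j. (c - y j) \<bullet> (c - y j) = (c - m) \<bullet> (c - m) + 2 * ((c - m) \<bullet> (m - y j)) + (m - y j) \<bullet> (m - y j)"
  proof -
    fix j
    show "(c - y j) \<bullet> (c - y j) = (c - m) \<bullet> (c - m) + 2 * ((c - m) \<bullet> (m - y j)) + (m - y j) \<bullet> (m - y j)"
      by (simp add: inner_diff_left inner_diff_right inner_commute algebra_simps)
  qed
  have "(\<Sum>j\<in>I. (c - y j) \<bullet> (c - y j)) = (\<Sum>j\<in>I. (c - m) \<bullet> (c - m)) + 2 * ((c - m) \<bullet> (\<Sum>j\<in>I. (m - y j))) + (\<Sum>j\<in>I. (m - y j) \<bullet> (m - y j))"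
    by (simp add: e sum.distrib inner_sum_right sum_distrib_left)
  then show ?thesis using sm by simp
qed

lemma geo_cert:
  fixes S :: "'a::euclidean_space set"
  assumes fin: "finite S" and fS: "\<forall>x\<in>S. f x \<in> {1..r}" and ne: "\<forall>j\<in>{1..r}. cls S f j \<noteq> {}"
    and empt: "(\<Inter>j\<in>{1..r}. convex hull (cls S f j)) = {}"
  shows "\<exists>a b. (\<Sum>j\<in>{1..r}. a j) = 0 \<and> (\<Sum>j\<in>{1..r}. b j) = (0::real) \<and>
            (\<forall>x\<in>S. 0 < a (f x) \<bullet> x + b (f x))"
proof -
  define K where "K j = convex hull (cls S f j)" for j
  have r0: "{1..r} \<noteq> {}" using empt by (metis INF_empty UNIV_not_empty)
  then have r1: "r \<ge> 1" by simp
  have Kc: "compact (K j)" for j unfolding K_def using fin by (intro finite_imp_compact_convex_hull) simp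
  have Kcl: "closed (K j)" for j using Kc compact_imp_closed by blast
  have Kcv: "convex (K j)" for j unfolding K_def by simp
  have Kne: "K j \<noteq> {}" if "j \<in> {1..r}" for j using ne that unfolding K_def by simp
  define Co where "Co = convex hull S"
  have KCo: "K j \<subseteq> Co" for j unfolding K_def Co_def by (intro hull_mono) auto
  have Coc: "compact Co" unfolding Co_def using fin by (intro finite_imp_compact_convex_hull)
  have Cone: "Co \<noteq> {}" using Kne[of 1] KCo[of 1] r1 by auto
  define g where "g c = (\<Sum>j\<in>{1..r}. (infdist c (K j))^2)" for c
  have gc: "continuous_on Co g" unfolding g_def by (intro continuous_intros)
  obtain c where cC: "c \<in> Co" and cmin: "\<forall>c'\<in>Co. g c \<le> g c'"
    using continuous_attains_inf[OF Coc Cone gc] by blast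
  define y where "y j = closest_point (K j) c" for j
  have yK: "y j \<in> K j" if "j \<in> {1..r}" for j unfolding y_def using closest_point_in_set[OF Kcl Kne[OF that]] .
  have gy: "g c = (\<Sum>j\<in>{1..r}. (c - y j) \<bullet> (c - y j))"
    unfolding g_def
  proof (rule sum.cong[OF refl])
    fix j assume j: "j \<in> {1..r}"
    have "infdist c (K j) = dist c (y j)" unfolding y_def by (rule infdist_closest[OF Kcl Kne[OF j]])
    then show "(infdist c (K j))^2 = (c - y j) \<bullet> (c - y j)"
      by (simp add: dist_norm power2_norm_eq_inner)
  qed
  define m where "m = (1 / real (card {1..r})) *\<^sub>R (\<Sum>j\<in>{1..r}. y j)"
  have mC: "m \<in> Co"
  proof -
    have "(\<Sum>j\<in>{1..r}. (1 / real (card {1..r})) *\<^sub>R y j) \<in> Co"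
      using r1 yK KCo by (intro convex_sum) (auto simp: Co_def)
    then show ?thesis unfolding m_def by (simp add: scaleR_sum_right)
  qed
  have "g m \<le> (\<Sum>j\<in>{1..r}. (m - y j) \<bullet> (m - y j))"
    unfolding g_def
  proof (rule sum_mono)
    fix j assume j: "j \<in> {1..r}"
    have "infdist m (K j) \<le> dist m (y j)" using infdist_le[OF yK[OF j]] .
    then have "(infdist m (K j))^2 \<le> (dist m (y j))^2" using infdist_nonneg by (intro power_mono) auto
    then show "(infdist m (K j))^2 \<le> (m - y j) \<bullet> (m - y j)" by (simp add: dist_norm power2_norm_eq_inner)
  qed
  moreover have "g c \<le> g m" using cmin mC by blast
  moreover have "g c = (\<Sum>j\<in>{1..r}. (m - y j) \<bullet> (m - y j)) + real (card {1..r}) * ((c - m) \<bullet> (c - m))"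
    unfolding gy by (rule sum_sq_identity[OF _ m_def r0]) simp
  ultimately have "real (card {1..r}) * ((c - m) \<bullet> (c - m)) \<le> 0" by linarith
  moreover have "real (card {1..r}) > 0" using r1 by simp
  ultimately have "(c - m) \<bullet> (c - m) \<le> 0" by (simp add: mult_le_0_iff)
  then have cm: "c = m" by (metis inner_gt_zero_iff not_le right_minus_eq)
  define a where "a j = y j - c" for j
  have suma: "(\<Sum>j\<in>{1..r}. a j) = 0"
  proof -
    have "(\<Sum>j\<in>{1..r}. a j) = (\<Sum>j\<in>{1..r}. y j) - real (card {1..r}) *\<^sub>R c"
      unfolding a_def by (simp add: sum_subtractf sum_constant_scaleR)
    also have "real (card {1..r}) *\<^sub>R c = (\<Sum>j\<in>{1..r}. y j)" unfolding cm m_def using r1 by simp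
    finally show ?thesis by simp
  qed
  define s where "s = (\<Sum>j\<in>{1..r}. a j \<bullet> a j)"
  have s0: "s > 0"
  proof (rule ccontr)
    assume "\<not> s > 0"
    moreover have "s \<ge> 0" unfolding s_def by (intro sum_nonneg) simp
    ultimately have "s = 0" by simp
    then have "\<forall>j\<in>{1..r}. a j \<bullet> a j = 0" unfolding s_def by (subst (asm) sum_nonneg_eq_0_iff) auto
    then have "\<forall>j\<in>{1..r}. c = y j" unfolding a_def by simp
    then have "c \<in> (\<Inter>j\<in>{1..r}. K j)" using yK by auto
    then show False using empt unfolding K_def by blast
  qed
  define b where "b j = s / real r - a j \<bullet> y j" for j
  have sumb: "(\<Sum>j\<in>{1..r}. b j) = 0"
  proof -
    have "(\<Sum>j\<in>{1..r}. a j \<bullet> y j) = (\<Sum>j\<in>{1..r}. a j \<bullet> a j + a j \<bullet> c)"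
      unfolding a_def by (intro sum.cong) (auto simp: inner_diff_right inner_diff_left)
    also have "\<dots> = s + (\<Sum>j\<in>{1..r}. a j) \<bullet> c" unfolding s_def by (simp add: sum.distrib inner_sum_left)
    finally have "(\<Sum>j\<in>{1..r}. a j \<bullet> y j) = s" using suma by simp
    then show ?thesis unfolding b_def using r1 by (simp add: sum_subtractf)
  qed
  have pos: "0 < a (f x) \<bullet> x + b (f x)" if x: "x \<in> S" for x
  proof -
    let ?j = "f x"
    have j: "?j \<in> {1..r}" using fS x by blast
    have "x \<in> K ?j" unfolding K_def using x by (intro hull_inc) simp
    then have "(c - closest_point (K ?j) c) \<bullet> (x - closest_point (K ?j) c) \<le> 0"
      by (intro closest_point_dot[OF Kcv Kcl])
    then have "(c - y ?j) \<bullet> (x - y ?j) \<le> 0" unfolding y_def .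
    then have "a ?j \<bullet> x - a ?j \<bullet> y ?j \<ge> 0" unfolding a_def
      by (simp add: inner_diff_left inner_diff_right inner_commute algebra_simps)
    moreover have "s / real r > 0" using s0 r1 by simp
    ultimately show ?thesis unfolding b_def by simp
  qed
  show ?thesis using suma sumb pos by blast
qed

definition bad_cert :: "('a::euclidean_space) set \<Rightarrow> nat \<Rightarrow> ('a \<Rightarrow> nat) \<Rightarrow> bool" where
  "bad_cert S r f \<longleftrightarrow> (\<exists>a b. (\<Sum>j\<in>{1..r}. a j) = 0 \<and> (\<Sum>j\<in>{1..r}. b j) = (0::real) \<and>
      card {x\<in>S. a (f x) \<bullet> x + b (f x) \<le> 0} \<le> 1)"

lemma cls_ge2:
  assumes fin: "finite S" and nb: "\<not> bad_cert S r f" and j: "j \<in> {1..r}"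
  shows "card (cls S f j) \<ge> 2"
proof (rule ccontr)
  assume "\<not> card (cls S f j) \<ge> 2"
  then have c1: "card (cls S f j) \<le> 1" by simp
  define b where "b i = (if i = j then - (real r - 1) else 1)" for i
  have "(\<Sum>i\<in>{1..r}. b i) = b j + (\<Sum>i\<in>{1..r} - {j}. b i)"
    using j by (simp add: sum.remove)
  also have "(\<Sum>i\<in>{1..r} - {j}. b i) = (\<Sum>i\<in>{1..r} - {j}. 1)"
    unfolding b_def by (intro sum.cong) auto
  also have "\<dots> = real r - 1" using j by (simp add: of_nat_diff)
  finally have sb: "(\<Sum>i\<in>{1..r}. b i) = 0" unfolding b_def by simp
  have "{x\<in>S. (0::'a) \<bullet> x + b (f x) \<le> 0} = cls S f j"
    using j unfolding b_def by auto
  then have "bad_cert S r f" unfolding bad_cert_def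
    using sb c1 by (intro exI[of _ "\<lambda>_. 0"] exI[of _ b]) simp
  with nb show False by simp
qed

lemma tv_of:
  fixes S :: "'a::euclidean_space set"
  assumes fin: "finite S" and nb: "\<not> bad_cert S r f"
    and gS: "\<forall>x\<in>S. g x \<in> {1..r}" and gne: "\<forall>j\<in>{1..r}. cls S g j \<noteq> {}"
    and dif: "card {x\<in>S. g x \<noteq> f x} \<le> 1"
  shows "tverberg_partition S r (label_partition S r g)"
  unfolding tverberg_partition_def
proof
  show "is_partition S r (label_partition S r g)" by (rule LP_is_partition[OF gS gne])
  show "(\<Inter>B\<in>label_partition S r g. convex hull B) \<noteq> {}"
  proof
    assume "(\<Inter>B\<in>label_partition S r g. convex hull B) = {}"
    then have "(\<Inter>j\<in>{1..r}. convex hull (cls S g j)) = {}"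
      unfolding LP_image[OF gne] by (simp add: image_image)
    then obtain a b where ab: "(\<Sum>j\<in>{1..r}. a j) = 0" "(\<Sum>j\<in>{1..r}. b j) = (0::real)"
        "\<forall>x\<in>S. 0 < a (g x) \<bullet> x + b (g x)"
      using geo_cert[OF fin gS gne] by blast
    have "{x\<in>S. a (f x) \<bullet> x + b (f x) \<le> 0} \<subseteq> {x\<in>S. g x \<noteq> f x}"
    proof
      fix x assume "x \<in> {x\<in>S. a (f x) \<bullet> x + b (f x) \<le> 0}"
      then have x: "x \<in> S" "a (f x) \<bullet> x + b (f x) \<le> 0" by auto
      have "g x \<noteq> f x"
      proof
        assume "g x = f x"
        with ab(3) x show False by fastforce
      qed
      with x show "x \<in> {x\<in>S. g x \<noteq> f x}" by simp
    qed
    then have "card {x\<in>S. a (f x) \<bullet> x + b (f x) \<le> 0} \<le> 1"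
      using dif fin card_mono[of "{x\<in>S. g x \<noteq> f x}" "{x\<in>S. a (f x) \<bullet> x + b (f x) \<le> 0}"] by simp
    then have "bad_cert S r f" unfolding bad_cert_def using ab(1,2) by blast
    with nb show False by simp
  qed
qed

lemma pd_self:
  assumes "finite S" "\<forall>x\<in>S. f x \<in> {1..r}"
  shows "partition_dist S (label_partition S r f) (label_partition S r f) = 0"
  unfolding partition_dist_def
  by (rule Least_eq_0) (intro exI[of _ "{}"]; simp)

lemma pd_ex:
  assumes "finite S"
  shows "\<exists>R. R \<subseteq> S \<and> card R = card S \<and> restrict_partition P (S - R) = restrict_partition P' (S - R)"
  by (intro exI[of _ S]) (auto simp: restrict_partition_def)

lemma moved:
  assumes fS: "\<forall>x\<in>S. f x \<in> {1..r}" and ge2: "\<forall>j\<in>{1..r}. card (cls S f j) \<ge> 2"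
    and x: "x \<in> S" and k: "k \<in> {1..r}"
  shows "\<forall>w\<in>S. (f(x:=k)) w \<in> {1..r}" "\<forall>j\<in>{1..r}. cls S (f(x:=k)) j \<noteq> {}"
    "card {w\<in>S. (f(x:=k)) w \<noteq> f w} \<le> 1"
    "\<forall>j\<in>{1..r}. cls S f j - {x} \<noteq> {}"
proof -
  show "\<forall>w\<in>S. (f(x:=k)) w \<in> {1..r}" using fS k by auto
  show ne2: "\<forall>j\<in>{1..r}. cls S f j - {x} \<noteq> {}"
  proof
    fix j assume j: "j \<in> {1..r}"
    show "cls S f j - {x} \<noteq> {}"
    proof
      assume "cls S f j - {x} = {}"
      then have "cls S f j \<subseteq> {x}" by blast
      then have "card (cls S f j) \<le> 1" using card_mono[of "{x}"] by fastforce
      with ge2 j show False by fastforce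
    qed
  qed
  show "\<forall>j\<in>{1..r}. cls S (f(x:=k)) j \<noteq> {}"
  proof
    fix j assume j: "j \<in> {1..r}"
    obtain w where "w \<in> cls S f j - {x}" using ne2 j by blast
    then have "w \<in> cls S (f(x:=k)) j" by auto
    then show "cls S (f(x:=k)) j \<noteq> {}" by blast
  qed
  have "{w\<in>S. (f(x:=k)) w \<noteq> f w} \<subseteq> {x}" by auto
  then show "card {w\<in>S. (f(x:=k)) w \<noteq> f w} \<le> 1" using card_mono[of "{x}"] by fastforce
qed

lemma pd_moved:
  assumes fin: "finite S" and fS: "\<forall>x\<in>S. f x \<in> {1..r}" and ge2: "\<forall>j\<in>{1..r}. card (cls S f j) \<ge> 2"
    and x: "x \<in> S" and k: "k \<in> {1..r}" and kx: "k \<noteq> f x"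
  shows "partition_dist S (label_partition S r f) (label_partition S r (f(x:=k))) = 1"
  unfolding partition_dist_def
proof (rule Least_equality)
  let ?g = "f(x:=k)"
  note mv = moved[OF fS ge2 x k]
  have "restrict_partition (label_partition S r f) (S - {x}) = label_partition (S - {x}) r f"
    by (rule restrict_LP) auto
  also have "\<dots> = label_partition (S - {x}) r ?g" by (rule LP_cong) auto
  also have "\<dots> = restrict_partition (label_partition S r ?g) (S - {x})"
    by (rule restrict_LP[symmetric]) auto
  finally show "\<exists>R\<subseteq>S. card R = 1 \<and> restrict_partition (label_partition S r f) (S - R) =
      restrict_partition (label_partition S r ?g) (S - R)"
    using x by (intro exI[of _ "{x}"]) auto
next
  let ?g = "f(x:=k)"
  note mv = moved[OF fS ge2 x k]
  fix m assume "\<exists>R\<subseteq>S. card R = m \<and> restrict_partition (label_partition S r f) (S - R) =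
      restrict_partition (label_partition S r ?g) (S - R)"
  then obtain R where R: "R \<subseteq> S" "card R = m" "restrict_partition (label_partition S r f) (S - R) =
      restrict_partition (label_partition S r ?g) (S - R)" by blast
  show "1 \<le> m"
  proof (rule ccontr)
    assume "\<not> 1 \<le> m"
    then have "m = 0" by simp
    then have "R = {}" using R fin finite_subset by fastforce
    then have "label_partition S r f = label_partition S r ?g"
      using R(3) restrict_LP[of S S r f] restrict_LP[of S S r ?g] by simp
    from LP_block[OF this x fS mv(1)] have e: "cls S f (f x) = cls S ?g k" by simp
    obtain w where w: "w \<in> cls S f k - {x}" using mv(4) k by blast
    then have "w \<in> cls S ?g k" by auto
    with e have "f w = f x" by blast
    with w kx show False by simp
  qed
qed

lemma pd_neighbor:
  fixes S :: "'a::euclidean_space set"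
  assumes fin: "finite S" and fS: "\<forall>x\<in>S. f x \<in> {1..r}" and ge2: "\<forall>j\<in>{1..r}. card (cls S f j) \<ge> 2"
    and P': "is_partition S r P'" and pd: "partition_dist S (label_partition S r f) P' = 1"
  shows "\<exists>x k. x \<in> S \<and> k \<in> {1..r} \<and> k \<noteq> f x \<and> P' = label_partition S r (f(x:=k))"
proof -
  let ?P = "label_partition S r f"
  have ne: "\<forall>j\<in>{1..r}. cls S f j \<noteq> {}"
  proof
    fix j assume "j \<in> {1..r}"
    with ge2 have "2 \<le> card (cls S f j)" by blast
    then show "cls S f j \<noteq> {}" by (metis card.empty not_numeral_le_zero)
  qed
  have ex: "\<exists>R. R \<subseteq> S \<and> card R = card S \<and> restrict_partition ?P (S - R) = restrict_partition P' (S - R)"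
  proof -
    have e: "\<And>Q. restrict_partition Q {} = {}" unfolding restrict_partition_def by blast
    show ?thesis by (intro exI[of _ S]) (simp add: e)
  qed
  have "\<exists>R. R \<subseteq> S \<and> card R = 1 \<and> restrict_partition ?P (S - R) = restrict_partition P' (S - R)"
  proof -
    have "\<exists>k R. R \<subseteq> S \<and> card R = k \<and> restrict_partition ?P (S - R) = restrict_partition P' (S - R)"
      using ex by blast
    from LeastI_ex[OF this] pd show ?thesis unfolding partition_dist_def by simp
  qed
  then obtain R where R: "R \<subseteq> S" "card R = 1" "restrict_partition ?P (S - R) = restrict_partition P' (S - R)"
    by blast
  then obtain x where Rx: "R = {x}" by (meson card_1_singletonE)
  with R have x: "x \<in> S" by simp
  have r1: "r \<ge> 1" using fS x by auto
  note mv0 = moved[OF fS ge2 x]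
  have ne2: "\<forall>j\<in>{1..r}. cls S f j - {x} \<noteq> {}" using mv0[of 1] r1 by simp
  have RP: "restrict_partition ?P (S - {x}) = (\<lambda>j. cls S f j - {x}) ` {1..r}"
  proof -
    have e: "\<And>j. cls (S - {x}) f j = cls S f j - {x}" by blast
    have ne3: "\<forall>j\<in>{1..r}. cls (S - {x}) f j \<noteq> {}" unfolding e using ne2 .
    have "restrict_partition ?P (S - {x}) = label_partition (S - {x}) r f" by (rule restrict_LP) blast
    also have "\<dots> = (\<lambda>j. cls (S - {x}) f j) ` {1..r}"
      by (rule LP_image[OF ne3])
    also have "(\<lambda>j. cls (S - {x}) f j) = (\<lambda>j. cls S f j - {x})" unfolding e ..
    finally show ?thesis .
  qed
  have injR: "inj_on (\<lambda>j. cls S f j - {x}) {1..r}"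
  proof (rule inj_onI)
    fix i j assume i: "i \<in> {1..r}" and j: "j \<in> {1..r}" and e: "cls S f i - {x} = cls S f j - {x}"
    obtain w where w: "w \<in> cls S f i - {x}" using ne2 i by blast
    have w2: "w \<in> cls S f j - {x}" using w unfolding e .
    from w w2 show "i = j" by simp
  qed
  have cardR: "card (restrict_partition ?P (S - {x})) = r" unfolding RP card_image[OF injR] by simp
  have RP': "restrict_partition P' (S - {x}) = (\<lambda>B. B - {x}) ` P' - {{}}"
  proof -
    have "\<And>B. B \<in> P' \<Longrightarrow> B \<inter> (S - {x}) = B - {x}" using P' unfolding is_partition_def by blast
    then have "(\<lambda>B. B \<inter> (S - {x})) ` P' = (\<lambda>B. B - {x}) ` P'" by (rule image_cong[OF refl])
    then show ?thesis unfolding restrict_partition_def by simp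
  qed
  have Pp: "\<forall>B\<in>P'. B \<noteq> {} \<and> B \<subseteq> S" "\<Union>P' = S" "\<forall>B\<in>P'. \<forall>C\<in>P'. B \<noteq> C \<longrightarrow> B \<inter> C = {}"
    "finite P'" "card P' = r"
  proof -
    note Pp0 = P'[unfolded is_partition_def]
    show "\<forall>B\<in>P'. B \<noteq> {} \<and> B \<subseteq> S" using Pp0 by (rule conjunct1)
    show "\<Union>P' = S" using Pp0 by (rule conjunct1[OF conjunct2])
    show "\<forall>B\<in>P'. \<forall>C\<in>P'. B \<noteq> C \<longrightarrow> B \<inter> C = {}" using Pp0 by (rule conjunct1[OF conjunct2[OF conjunct2]])
    show "finite P'" using Pp0 by (rule conjunct1[OF conjunct2[OF conjunct2[OF conjunct2]]])
    show "card P' = r" using Pp0 by (rule conjunct2[OF conjunct2[OF conjunct2[OF conjunct2]]])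
  qed
  have "x \<in> \<Union>P'" unfolding Pp(2) by (rule x)
  then obtain B' where B': "B' \<in> P'" "x \<in> B'" by (rule UnionE)
  have Bx: "B' - {x} \<noteq> {}"
  proof
    assume B0: "B' - {x} = {}"
    have "(\<lambda>B. B - {x}) ` P' - {{}} \<subseteq> (\<lambda>B. B - {x}) ` (P' - {B'})" using B0 by auto
    then have "card ((\<lambda>B. B - {x}) ` P' - {{}}) \<le> card ((\<lambda>B. B - {x}) ` (P' - {B'}))"
      using Pp(4) by (intro card_mono) auto
    also have "\<dots> \<le> card (P' - {B'})" using Pp(4) by (intro card_image_le) auto
    also have "\<dots> = r - 1" using Pp(5) B'(1) Pp(4) by simp
    finally have "r \<le> r - 1" using cardR R(3) Rx RP' by simp
    with r1 show False by simp
  qed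
  have "B' - {x} \<in> restrict_partition P' (S - {x})" unfolding RP' using B'(1) Bx by blast
  then have "B' - {x} \<in> (\<lambda>j. cls S f j - {x}) ` {1..r}" using R(3) Rx RP by simp
  then obtain k where k: "k \<in> {1..r}" "B' - {x} = cls S f k - {x}" by blast
  let ?g = "f(x:=k)"
  note mv = moved[OF fS ge2 x k(1)]
  have sub: "P' \<subseteq> label_partition S r ?g"
  proof
    fix B assume B: "B \<in> P'"
    show "B \<in> label_partition S r ?g"
    proof (cases "x \<in> B")
      case True
      then have "B = B'" using Pp(3) B B' by blast
      then have "B = (cls S f k - {x}) \<union> {x}" using k(2) B'(2) by blast
      also have "\<dots> = cls S ?g k" using x by auto
      finally show ?thesis unfolding LP_image[OF mv(2)] using k(1) by blast
    next
      case False
      have "B - {x} \<in> restrict_partition P' (S - {x})" unfolding RP' using B False Pp(1) by auto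
      then have "B - {x} \<in> (\<lambda>j. cls S f j - {x}) ` {1..r}" using R(3) Rx RP by simp
      then obtain j where j0: "j \<in> {1..r}" "B - {x} = cls S f j - {x}" by (rule imageE) blast
      have "B - {x} = B" using False by simp
      with j0 have j: "j \<in> {1..r}" "B = cls S f j - {x}" by simp_all
      have "j \<noteq> k"
      proof
        assume "j = k"
        then have "B = B' - {x}" using j k by simp
        then have "B \<noteq> B'" "B \<inter> B' \<noteq> {}" using B'(2) Bx by auto
        with Pp(3) B B'(1) show False by blast
      qed
      then have "B = cls S ?g j" using j(2) by auto
      then show ?thesis unfolding LP_image[OF mv(2)] using j(1) by blast
    qed
  qed
  have finL: "finite (label_partition S r ?g)" unfolding label_partition_def by simp
  have eq: "P' = label_partition S r ?g"
    using card_subset_eq[OF finL sub] Pp(5) LP_card[OF mv(2)] by simp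
  have "k \<noteq> f x"
  proof
    assume "k = f x"
    then have "?g = f" by simp
    then have "P' = ?P" using eq by simp
    then show False using pd pd_self[OF fin fS] by simp
  qed
  then show ?thesis using x k(1) eq by blast
qed

lemma LP_moved_inj:
  assumes fS: "\<forall>x\<in>S. f x \<in> {1..r}" and ge2: "\<forall>j\<in>{1..r}. card (cls S f j) \<ge> 2"
  shows "inj_on (\<lambda>(x,k). label_partition S r (f(x:=k))) (Sigma S (\<lambda>x. {1..r} - {f x}))"
proof (rule inj_onI)
  fix p q assume p: "p \<in> Sigma S (\<lambda>x. {1..r} - {f x})" and q: "q \<in> Sigma S (\<lambda>x. {1..r} - {f x})"
    and epq: "(\<lambda>(x,k). label_partition S r (f(x:=k))) p = (\<lambda>(x,k). label_partition S r (f(x:=k))) q"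
  obtain x k where pxk: "p = (x,k)" by (cases p)
  obtain y l where qyl: "q = (y,l)" by (cases q)
  have x: "x \<in> S" and k: "k \<in> {1..r}" "k \<noteq> f x" using p pxk by auto
  have y: "y \<in> S" and l: "l \<in> {1..r}" "l \<noteq> f y" using q qyl by auto
  have e: "label_partition S r (f(x:=k)) = label_partition S r (f(y:=l))" using epq pxk qyl by simp
  note mx = moved[OF fS ge2 x k(1)] and my = moved[OF fS ge2 y l(1)]
  from LP_block[OF e x mx(1) my(1)]
  have blk: "cls S (f(x:=k)) k = cls S (f(y:=l)) ((f(y:=l)) x)" by simp
  have "x = y \<and> k = l"
  proof (cases "x = y")
    case True
    obtain w where w: "w \<in> cls S f k - {x}" using mx(4) k by blast
    then have wA: "w \<in> cls S (f(x:=k)) k" by auto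
    have AB: "cls S (f(x:=k)) k = cls S (f(y:=l)) l" using blk True by simp
    have "w \<in> cls S (f(y:=l)) l" using wA unfolding AB .
    moreover have "w \<noteq> y" using w True by simp
    ultimately have "f w = l" by simp
    with w have "k = l" by simp
    with True show ?thesis by simp
  next
    case False
    have c2: "card (cls S f k) \<ge> 2" using ge2 k by blast
    obtain w where w: "w \<in> cls S f k - {y}"
    proof -
      have "cls S f k - {y} \<noteq> {}"
      proof
        assume "cls S f k - {y} = {}"
        then have "cls S f k \<subseteq> {y}" by blast
        then have "card (cls S f k) \<le> 1" using card_mono[of "{y}"] by fastforce
        with c2 show False by simp
      qed
      then show ?thesis using that by blast
    qed
    have wx: "w \<noteq> x" using w k by auto
    then have wA: "w \<in> cls S (f(x:=k)) k" using w by auto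
    have AB: "cls S (f(x:=k)) k = cls S (f(y:=l)) (f x)" using blk False by simp
    have "w \<in> cls S (f(y:=l)) (f x)" using wA unfolding AB .
    moreover have "w \<noteq> y" using w by simp
    ultimately have "f w = f x" by simp
    with w k show ?thesis by simp
  qed
  then show "p = q" using pxk qyl by simp
qed

lemma good:
  fixes S :: "'a::euclidean_space set"
  assumes fin: "finite S" and fE: "f \<in> S \<rightarrow>\<^sub>E {1..r}" and nb: "\<not> bad_cert S r f"
  shows "tverberg_partition S r (label_partition S r f) \<and>
         tverberg_degree S r (label_partition S r f) = card S * (r - 1)"
proof -
  have fS: "\<forall>x\<in>S. f x \<in> {1..r}" using fE by (auto simp: PiE_def Pi_def)
  have ge2: "\<forall>j\<in>{1..r}. card (cls S f j) \<ge> 2" using cls_ge2[OF fin nb] by blast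
  have ne: "\<forall>j\<in>{1..r}. cls S f j \<noteq> {}"
  proof
    fix j assume "j \<in> {1..r}"
    with ge2 have "2 \<le> card (cls S f j)" by blast
    then show "cls S f j \<noteq> {}" by (metis card.empty not_numeral_le_zero)
  qed
  have tv: "tverberg_partition S r (label_partition S r f)"
    by (rule tv_of[OF fin nb fS ne]) simp
  define Dm where "Dm = Sigma S (\<lambda>x. {1..r} - {f x})"
  have Neq: "{P'. tverberg_partition S r P' \<and> partition_dist S (label_partition S r f) P' = 1}
      = (\<lambda>(x,k). label_partition S r (f(x:=k))) ` Dm"
  proof (rule set_eqI, rule iffI)
    fix P' assume "P' \<in> {P'. tverberg_partition S r P' \<and> partition_dist S (label_partition S r f) P' = 1}"
    then have P': "is_partition S r P'" "partition_dist S (label_partition S r f) P' = 1"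
      unfolding tverberg_partition_def by auto
    obtain x k where xk: "x \<in> S" "k \<in> {1..r}" "k \<noteq> f x" "P' = label_partition S r (f(x:=k))"
      using pd_neighbor[OF fin fS ge2 P'] by blast
    then have "(x,k) \<in> Dm" unfolding Dm_def by auto
    then show "P' \<in> (\<lambda>(x,k). label_partition S r (f(x:=k))) ` Dm"
      using xk(4) by (intro rev_image_eqI[of "(x,k)"]) auto
  next
    fix P' assume "P' \<in> (\<lambda>(x,k). label_partition S r (f(x:=k))) ` Dm"
    then obtain p where p: "p \<in> Dm" "P' = (\<lambda>(x,k). label_partition S r (f(x:=k))) p" by (rule imageE) blast
    obtain x k where pxk: "p = (x,k)" by (cases p)
    have xk: "x \<in> S" "k \<in> {1..r}" "k \<noteq> f x" "P' = label_partition S r (f(x:=k))"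
      using p pxk unfolding Dm_def by auto
    note mv = moved[OF fS ge2 xk(1,2)]
    have "tverberg_partition S r P'" unfolding xk(4) by (rule tv_of[OF fin nb mv(1) mv(2) mv(3)])
    moreover have "partition_dist S (label_partition S r f) P' = 1"
      unfolding xk(4) by (rule pd_moved[OF fin fS ge2 xk(1,2,3)])
    ultimately show "P' \<in> {P'. tverberg_partition S r P' \<and> partition_dist S (label_partition S r f) P' = 1}"
      by simp
  qed
  have "card Dm = (\<Sum>x\<in>S. card ({1..r} - {f x}))" unfolding Dm_def using fin by (intro card_SigmaI) auto
  also have "\<dots> = (\<Sum>x\<in>S. r - 1)" using fS by (intro sum.cong) auto
  also have "\<dots> = card S * (r - 1)" by simp
  finally have cD: "card Dm = card S * (r - 1)" .
  have "tverberg_degree S r (label_partition S r f) = card Dm"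
    unfolding tverberg_degree_def Neq Dm_def by (rule card_image[OF LP_moved_inj[OF fS ge2]])
  with tv cD show ?thesis by simp
qed

definition shatters :: "'a set set \<Rightarrow> 'a set \<Rightarrow> bool" where
  "shatters F A \<longleftrightarrow> (\<lambda>B. B \<inter> A) ` F = Pow A"

lemma pajor:
  assumes "finite G" "F \<subseteq> Pow G"
  shows "card F \<le> card {A. A \<subseteq> G \<and> shatters F A}"
  using assms
proof (induction G arbitrary: F rule: finite_induct)
  case empty
  then have "F = {} \<or> F = {{}}" by (metis Pow_empty subset_singletonD)
  then show ?case
  proof
    assume "F = {}" then show ?thesis by simp
  next
    assume F: "F = {{}}"
    have "shatters F {}" unfolding F shatters_def by simp
    then have "{A. A \<subseteq> {} \<and> shatters F A} = {{}}" by auto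
    then show ?thesis using F by simp
  qed
next
  case (insert x G)
  define Fa where "Fa = {B\<in>F. x \<notin> B}"
  define Fb where "Fb = {B\<in>F. x \<in> B}"
  define Fb' where "Fb' = (\<lambda>B. B - {x}) ` Fb"
  define F0 where "F0 = Fa \<union> Fb'"
  define F1 where "F1 = Fa \<inter> Fb'"
  have finF: "finite F" using insert.prems insert.hyps(1) by (meson finite_Pow_iff finite_insert finite_subset)
  have finFa: "finite Fa" "finite Fb" "finite Fb'" unfolding Fa_def Fb_def Fb'_def using finF by auto
  have cF: "card F = card Fa + card Fb"
  proof -
    have "F = Fa \<union> Fb" "Fa \<inter> Fb = {}" unfolding Fa_def Fb_def by auto
    then show ?thesis using finFa card_Un_disjoint by metis
  qed
  have injb: "inj_on (\<lambda>B. B - {x}) Fb"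
  proof (rule inj_onI)
    fix B1 B2 assume "B1 \<in> Fb" "B2 \<in> Fb" "B1 - {x} = B2 - {x}"
    then show "B1 = B2" unfolding Fb_def by (metis insert_Diff mem_Collect_eq)
  qed
  have cb: "card Fb' = card Fb" unfolding Fb'_def by (rule card_image[OF injb])
  have c01: "card F0 + card F1 = card F" unfolding F0_def F1_def cF cb[symmetric]
    using card_Un_Int[OF finFa(1) finFa(3)] by simp
  have F0G: "F0 \<subseteq> Pow G" unfolding F0_def Fa_def Fb'_def Fb_def using insert.prems by auto
  have F1G: "F1 \<subseteq> Pow G" unfolding F1_def Fa_def using insert.prems by auto
  define sh0 where "sh0 = {A. A \<subseteq> G \<and> shatters F0 A}"
  define sh1 where "sh1 = {A. A \<subseteq> G \<and> shatters F1 A}"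
  define sh where "sh = {A. A \<subseteq> insert x G \<and> shatters F A}"
  have IH0: "card F0 \<le> card sh0" unfolding sh0_def by (rule insert.IH[OF F0G])
  have IH1: "card F1 \<le> card sh1" unfolding sh1_def by (rule insert.IH[OF F1G])
  have s0: "sh0 \<subseteq> sh"
  proof
    fix A assume "A \<in> sh0"
    then have A: "A \<subseteq> G" "(\<lambda>B. B \<inter> A) ` F0 = Pow A" unfolding sh0_def shatters_def by auto
    have xA: "x \<notin> A" using A(1) insert.hyps(2) by blast
    have "(\<lambda>B. B \<inter> A) ` F = Pow A"
    proof
      show "(\<lambda>B. B \<inter> A) ` F \<subseteq> Pow A" by auto
      show "Pow A \<subseteq> (\<lambda>B. B \<inter> A) ` F"
      proof
        fix C assume "C \<in> Pow A"
        then obtain B0 where B0: "B0 \<in> F0" "C = B0 \<inter> A" using A(2) by blast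
        show "C \<in> (\<lambda>B. B \<inter> A) ` F"
        proof (cases "B0 \<in> Fa")
          case True
          then show ?thesis using B0 unfolding Fa_def by blast
        next
          case False
          then have "B0 \<in> Fb'" using B0(1) unfolding F0_def by blast
          then obtain B where B: "B \<in> Fb" "B0 = B - {x}" unfolding Fb'_def by blast
          have "C = B \<inter> A" using B0(2) B(2) xA by blast
          then show ?thesis using B(1) unfolding Fb_def by blast
        qed
      qed
    qed
    then show "A \<in> sh" unfolding sh_def shatters_def using A(1) by auto
  qed
  have s1: "insert x ` sh1 \<subseteq> sh"
  proof
    fix A' assume "A' \<in> insert x ` sh1"
    then obtain A where A': "A' = insert x A" and "A \<in> sh1" by blast
    then have A: "A \<subseteq> G" "(\<lambda>B. B \<inter> A) ` F1 = Pow A" unfolding sh1_def shatters_def by auto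
    have xA: "x \<notin> A" using A(1) insert.hyps(2) by blast
    have "(\<lambda>B. B \<inter> insert x A) ` F = Pow (insert x A)"
    proof
      show "(\<lambda>B. B \<inter> insert x A) ` F \<subseteq> Pow (insert x A)" by auto
      show "Pow (insert x A) \<subseteq> (\<lambda>B. B \<inter> insert x A) ` F"
      proof
        fix C assume C: "C \<in> Pow (insert x A)"
        then have "C - {x} \<in> Pow A" by auto
        then obtain B where B: "B \<in> F1" "C - {x} = B \<inter> A" using A(2) by (metis imageE)
        have BF: "B \<in> F" "x \<notin> B" using B(1) unfolding F1_def Fa_def by auto
        from B(1) have "B \<in> Fb'" unfolding F1_def by blast
        then obtain B2 where B2: "B2 \<in> Fb" "B = B2 - {x}" unfolding Fb'_def by blast
        have iB: "insert x B \<in> F" using B2 unfolding Fb_def by (metis (mono_tags, lifting) insert_Diff mem_Collect_eq)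
        show "C \<in> (\<lambda>B. B \<inter> insert x A) ` F"
        proof (cases "x \<in> C")
          case True
          have "insert x B \<inter> insert x A = C" using True B(2) C by blast
          then show ?thesis using iB by blast
        next
          case False
          have "B \<inter> insert x A = C" using False B(2) BF(2) C by blast
          then show ?thesis using BF(1) by blast
        qed
      qed
    qed
    then show "A' \<in> sh" unfolding sh_def shatters_def A' using A(1) by auto
  qed
  have disj: "sh0 \<inter> insert x ` sh1 = {}" unfolding sh0_def using insert.hyps(2) by auto
  have finsh: "finite sh" unfolding sh_def using insert.hyps(1) by simp
  have injx: "inj_on (insert x) sh1"
  proof (rule inj_onI)
    fix A B assume "A \<in> sh1" "B \<in> sh1" "insert x A = insert x B"
    then show "A = B" unfolding sh1_def using insert.hyps(2)
      by (metis (no_types, lifting) Diff_insert_absorb mem_Collect_eq subset_iff)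
  qed
  have "card sh0 + card sh1 = card (sh0 \<union> insert x ` sh1)"
    using disj finite_subset[OF s0 finsh] finite_subset[OF s1 finsh] card_image[OF injx]
    by (simp add: card_Un_disjoint)
  also have "\<dots> \<le> card sh" using s0 s1 finsh by (intro card_mono) auto
  finally show ?case using IH0 IH1 c01 unfolding sh_def by linarith
qed

lemma card_small_subsets:
  assumes "finite S"
  shows "card {A. A \<subseteq> S \<and> card A \<le> m} \<le> (card S + 1) ^ m"
proof -
  let ?n = "card S"
  have "{A. A \<subseteq> S \<and> card A \<le> m} = (\<Union>k\<in>{..m}. {A. A \<subseteq> S \<and> card A = k})" by auto
  then have "card {A. A \<subseteq> S \<and> card A \<le> m} \<le> (\<Sum>k\<in>{..m}. card {A. A \<subseteq> S \<and> card A = k})"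
    using card_UN_le[of "{..m}" "\<lambda>k. {A. A \<subseteq> S \<and> card A = k}"] by simp
  also have "\<dots> = (\<Sum>k\<le>m. ?n choose k)" using n_subsets[OF assms] by simp
  also have "\<dots> \<le> (\<Sum>k\<le>m. (m choose k) * ?n ^ k)"
  proof (rule sum_mono)
    fix k assume "k \<in> {..m}"
    then have "k \<le> m" by simp
    then have "0 < m choose k" by (rule zero_less_binomial)
    then have "1 \<le> m choose k" by linarith
    moreover have "?n choose k \<le> ?n ^ k"
      by (cases "k \<le> ?n") (auto simp: binomial_le_pow binomial_eq_0)
    ultimately show "?n choose k \<le> (m choose k) * ?n ^ k"
      by (metis mult_le_mono nat_mult_1)
  qed
  also have "\<dots> = (?n + 1) ^ m"
  proof -
    have "(?n + 1) ^ m = (\<Sum>k\<le>m. of_nat (m choose k) * ?n ^ k * 1 ^ (m - k))" by (rule binomial_ring)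
    then show ?thesis by simp
  qed
  finally show ?thesis .
qed

definition traces :: "'a::euclidean_space set \<Rightarrow> 'a set set" where
  "traces S = {T. \<exists>a b. T = {x\<in>S. 0 < a \<bullet> x + b}}"

lemma shatter_small:
  fixes S :: "'a::euclidean_space set"
  assumes fin: "finite S" and AS: "A \<subseteq> S" and sh: "shatters (traces S) A"
  shows "card A \<le> DIM('a) + 1"
proof (rule ccontr)
  assume "\<not> card A \<le> DIM('a) + 1"
  then have cA: "card A \<ge> DIM('a) + 2" by simp
  have finA: "finite A" using fin AS finite_subset by blast
  have "affine_dependent A" using affine_dependent_biggerset[OF finA cA] .
  then obtain M P where MP: "M \<inter> P = {}" "M \<union> P = A" "convex hull M \<inter> convex hull P \<noteq> {}"
    using Radon_partition[OF finA] by blast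
  have "M \<in> Pow A" using MP by blast
  then obtain B where B: "B \<in> traces S" "M = B \<inter> A" using sh unfolding shatters_def by (metis imageE)
  then obtain a b where ab: "B = {x\<in>S. 0 < a \<bullet> x + b}" unfolding traces_def by blast
  have "M \<subseteq> {x. a \<bullet> x > - b}" using B(2) ab by auto
  then have hM: "convex hull M \<subseteq> {x. a \<bullet> x > - b}" by (intro hull_minimal) (auto simp: convex_halfspace_gt)
  have "P \<subseteq> {x. a \<bullet> x \<le> - b}"
  proof
    fix x assume x: "x \<in> P"
    then have "x \<in> A" "x \<notin> M" using MP by auto
    then have "x \<notin> B" using B(2) by blast
    moreover have "x \<in> S" using \<open>x \<in> A\<close> AS by blast
    ultimately show "x \<in> {x. a \<bullet> x \<le> - b}" using ab by auto
  qed
  then have hP: "convex hull P \<subseteq> {x. a \<bullet> x \<le> - b}" by (intro hull_minimal) (auto simp: convex_halfspace_le)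
  from MP(3) obtain z where "z \<in> convex hull M" "z \<in> convex hull P" by blast
  with hM hP show False by fastforce
qed

lemma card_traces:
  fixes S :: "'a::euclidean_space set"
  assumes fin: "finite S"
  shows "card (traces S) \<le> (card S + 1) ^ (DIM('a) + 1)"
proof -
  have "traces S \<subseteq> Pow S" unfolding traces_def by auto
  then have "card (traces S) \<le> card {A. A \<subseteq> S \<and> shatters (traces S) A}" by (rule pajor[OF fin])
  also have "\<dots> \<le> card {A. A \<subseteq> S \<and> card A \<le> DIM('a) + 1}"
    using shatter_small[OF fin] fin by (intro card_mono) auto
  also have "\<dots> \<le> (card S + 1) ^ (DIM('a) + 1)" by (rule card_small_subsets[OF fin])
  finally show ?thesis .
qed

lemma badA_card:
  assumes fin: "finite S" and A: "\<forall>x\<in>S. A x \<subseteq> {1..r} \<and> card (A x) \<le> r - 1"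
  shows "card {f \<in> S \<rightarrow>\<^sub>E {1..r}. card {x\<in>S. f x \<notin> A x} \<le> 1}
         \<le> (r - 1) ^ card S + card S * (r - 1) ^ (card S - 1)"
proof -
  have "\<forall>x\<in>S. \<exists>B. A x \<subseteq> B \<and> B \<subseteq> {1..r} \<and> card B = r - 1"
  proof
    fix x assume "x \<in> S"
    then have "card (A x) \<le> r - 1" "A x \<subseteq> {1..r}" using A by auto
    then show "\<exists>B. A x \<subseteq> B \<and> B \<subseteq> {1..r} \<and> card B = r - 1"
      using exists_subset_between[of "A x" "r - 1" "{1..r}"] by simp
  qed
  from bchoice[OF this] obtain A' where A': "\<forall>x\<in>S. A x \<subseteq> A' x \<and> A' x \<subseteq> {1..r} \<and> card (A' x) = r - 1"
    by (elim exE)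
  define U where "U = (\<Union>y\<in>S. Pi\<^sub>E S (A'(y := {1..r} - A' y)))"
  have sub: "{f \<in> S \<rightarrow>\<^sub>E {1..r}. card {x\<in>S. f x \<notin> A x} \<le> 1} \<subseteq> Pi\<^sub>E S A' \<union> U"
  proof
    fix f assume "f \<in> {f \<in> S \<rightarrow>\<^sub>E {1..r}. card {x\<in>S. f x \<notin> A x} \<le> 1}"
    then have f: "f \<in> S \<rightarrow>\<^sub>E {1..r}" "card {x\<in>S. f x \<notin> A x} \<le> 1" by auto
    have "{x\<in>S. f x \<notin> A' x} \<subseteq> {x\<in>S. f x \<notin> A x}" using A' by auto
    then have cM: "card {x\<in>S. f x \<notin> A' x} \<le> 1" using f(2) fin
      card_mono[of "{x\<in>S. f x \<notin> A x}" "{x\<in>S. f x \<notin> A' x}"] by simp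
    have finM: "finite {x\<in>S. f x \<notin> A' x}" using fin by simp
    show "f \<in> Pi\<^sub>E S A' \<union> U"
    proof (cases "{x\<in>S. f x \<notin> A' x} = {}")
      case True
      then have "f \<in> Pi\<^sub>E S A'" using f(1) unfolding PiE_def Pi_def by auto
      then show ?thesis by simp
    next
      case False
      then have "card {x\<in>S. f x \<notin> A' x} = 1" using cM finM by (simp add: card_gt_0_iff le_antisym Suc_leI)
      then obtain y where y: "{x\<in>S. f x \<notin> A' x} = {y}" by (rule card_1_singletonE)
      then have yS: "y \<in> S" "f y \<notin> A' y" by auto
      have "f \<in> Pi\<^sub>E S (A'(y := {1..r} - A' y))"
        unfolding PiE_def Pi_def
      proof (intro CollectI conjI IntI allI impI)
        fix x assume x: "x \<in> S"
        show "f x \<in> (A'(y := {1..r} - A' y)) x"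
        proof (cases "x = y")
          case True
          then show ?thesis using yS f(1) x by (auto simp: PiE_def Pi_def)
        next
          case False
          then have "x \<notin> {x\<in>S. f x \<notin> A' x}" using y by auto
          then show ?thesis using x False by auto
        qed
      next
        show "f \<in> extensional S" using f(1) by (simp add: PiE_def)
      qed
      then show ?thesis unfolding U_def using yS(1) by blast
    qed
  qed
  have c1: "card (Pi\<^sub>E S A') = (r - 1) ^ card S"
    using A' fin by (simp add: card_PiE)
  have c2: "card (Pi\<^sub>E S (A'(y := {1..r} - A' y))) \<le> (r - 1) ^ (card S - 1)" if y: "y \<in> S" for y
  proof -
    have "card (Pi\<^sub>E S (A'(y := {1..r} - A' y))) = (\<Prod>x\<in>S. card ((A'(y := {1..r} - A' y)) x))"
      using fin by (rule card_PiE)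
    also have "\<dots> = card ({1..r} - A' y) * (\<Prod>x\<in>S - {y}. card ((A'(y := {1..r} - A' y)) x))"
      using fin y by (simp add: prod.remove)
    also have "(\<Prod>x\<in>S - {y}. card ((A'(y := {1..r} - A' y)) x)) = (\<Prod>x\<in>S - {y}. r - 1)"
      using A' by (intro prod.cong) auto
    also have "\<dots> = (r - 1) ^ (card S - 1)" using y fin by simp
    also have "card ({1..r} - A' y) = r - (r - 1)"
    proof -
      have "A' y \<subseteq> {1..r}" "card (A' y) = r - 1" using A' y by auto
      moreover have "finite (A' y)" using \<open>A' y \<subseteq> {1..r}\<close> finite_subset by blast
      ultimately show ?thesis using card_Diff_subset[of "A' y" "{1..r}"] by simp
    qed
    finally have eq: "card (Pi\<^sub>E S (A'(y := {1..r} - A' y))) = (r - (r - 1)) * (r - 1) ^ (card S - 1)" .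
    have le: "(r - (r - 1)) * (r - 1) ^ (card S - 1) \<le> 1 * (r - 1) ^ (card S - 1)"
      by (intro mult_le_mono1) arith
    show ?thesis unfolding eq using le by simp
  qed
  have "card U \<le> (\<Sum>y\<in>S. card (Pi\<^sub>E S (A'(y := {1..r} - A' y))))"
    unfolding U_def by (rule card_UN_le[OF fin])
  also have "\<dots> \<le> (\<Sum>y\<in>S. (r - 1) ^ (card S - 1))" using c2 by (intro sum_mono) auto
  also have "\<dots> = card S * (r - 1) ^ (card S - 1)" by simp
  finally have cU: "card U \<le> card S * (r - 1) ^ (card S - 1)" .
  have finA': "finite (A' x)" if "x \<in> S" for x using A' that finite_subset[of "A' x" "{1..r}"] by auto
  have finU: "finite U" unfolding U_def using fin finA' by (intro finite_UN_I finite_PiE) auto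
  have "card {f \<in> S \<rightarrow>\<^sub>E {1..r}. card {x\<in>S. f x \<notin> A x} \<le> 1} \<le> card (Pi\<^sub>E S A' \<union> U)"
    using finU fin finA' by (intro card_mono[OF _ sub]) (auto intro: finite_PiE)
  also have "\<dots> \<le> card (Pi\<^sub>E S A') + card U" by (rule card_Un_le)
  finally show ?thesis using c1 cU by linarith
qed

definition Al :: "nat \<Rightarrow> (nat \<Rightarrow> 'a set) \<Rightarrow> 'a \<Rightarrow> nat set" where
  "Al r \<tau> x = {j\<in>{1..r-1}. x \<in> \<tau> j} \<union> (if (\<exists>j\<in>{1..r-1}. x \<notin> \<tau> j) then {r} else {})"

lemma Al_props: "Al r \<tau> x \<subseteq> {1..r} \<and> card (Al r \<tau> x) \<le> r - 1"
proof (cases "\<exists>j\<in>{1..r-1}. x \<notin> \<tau> j")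
  case True
  then obtain j0 where j0: "j0 \<in> {1..r-1}" "x \<notin> \<tau> j0" by blast
  then have "1 \<le> j0" "j0 \<le> r - 1" by auto
  then have r2: "r \<ge> 2" by arith
  have e: "Al r \<tau> x = insert r {j\<in>{1..r-1}. x \<in> \<tau> j}" unfolding Al_def using True by auto
  have s: "{j\<in>{1..r-1}. x \<in> \<tau> j} \<subseteq> {1..r-1} - {j0}" using j0 by auto
  have "card {j\<in>{1..r-1}. x \<in> \<tau> j} \<le> card ({1..r-1} - {j0})" by (rule card_mono[OF _ s]) simp
  also have "\<dots> = r - 2" using j0 by simp
  finally have cX: "card {j\<in>{1..r-1}. x \<in> \<tau> j} \<le> r - 2" .
  have finX: "finite {j\<in>{1..r-1}. x \<in> \<tau> j}" by simp
  have "card (Al r \<tau> x) \<le> Suc (card {j\<in>{1..r-1}. x \<in> \<tau> j})"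
    unfolding e using card_insert_if[OF finX, of r] by simp
  then have "card (Al r \<tau> x) \<le> r - 1" using cX r2 by linarith
  moreover have "Al r \<tau> x \<subseteq> {1..r}" unfolding e using r2 by auto
  ultimately show ?thesis by simp
next
  case False
  have e: "Al r \<tau> x = {j\<in>{1..r-1}. x \<in> \<tau> j}" unfolding Al_def using False by auto
  have "card (Al r \<tau> x) \<le> card {1..r-1}" unfolding e by (rule card_mono) auto
  then show ?thesis unfolding e by auto
qed

lemma bad_sub:
  fixes S :: "'a::euclidean_space set"
  assumes fin: "finite S"
  shows "{f \<in> S \<rightarrow>\<^sub>E {1..r}. bad_cert S r f} \<subseteq>
     (\<Union>\<tau>\<in>{1..r-1} \<rightarrow>\<^sub>E traces S. {f \<in> S \<rightarrow>\<^sub>E {1..r}. card {x\<in>S. f x \<notin> Al r \<tau> x} \<le> 1})"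
proof
  fix f assume "f \<in> {f \<in> S \<rightarrow>\<^sub>E {1..r}. bad_cert S r f}"
  then have fE: "f \<in> S \<rightarrow>\<^sub>E {1..r}" and bc: "bad_cert S r f" by auto
  from bc obtain a b where ab: "(\<Sum>j\<in>{1..r}. a j) = 0" "(\<Sum>j\<in>{1..r}. b j) = (0::real)"
    "card {x\<in>S. a (f x) \<bullet> x + b (f x) \<le> 0} \<le> 1" unfolding bad_cert_def by blast
  define \<tau> where "\<tau> = restrict (\<lambda>j. {x\<in>S. 0 < a j \<bullet> x + b j}) {1..r-1}"
  have \<tau>T: "\<tau> \<in> {1..r-1} \<rightarrow>\<^sub>E traces S" unfolding \<tau>_def traces_def by auto
  have hsum: "(\<Sum>j\<in>{1..r}. a j \<bullet> x + b j) = 0" for x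
  proof -
    have "(\<Sum>j\<in>{1..r}. a j \<bullet> x + b j) = (\<Sum>j\<in>{1..r}. a j) \<bullet> x + (\<Sum>j\<in>{1..r}. b j)"
      by (simp add: sum.distrib inner_sum_left)
    then show ?thesis using ab by simp
  qed
  have sub: "{x\<in>S. f x \<notin> Al r \<tau> x} \<subseteq> {x\<in>S. a (f x) \<bullet> x + b (f x) \<le> 0}"
  proof
    fix x assume "x \<in> {x\<in>S. f x \<notin> Al r \<tau> x}"
    then have x: "x \<in> S" "f x \<notin> Al r \<tau> x" by auto
    have fx: "f x \<in> {1..r}" using fE x(1) by (auto simp: PiE_def Pi_def)
    have "\<not> 0 < a (f x) \<bullet> x + b (f x)"
    proof
      assume pos: "0 < a (f x) \<bullet> x + b (f x)"
      show False
      proof (cases "f x \<le> r - 1")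
        case True
        then have "f x \<in> {1..r-1}" using fx by auto
        then have "x \<in> \<tau> (f x)" unfolding \<tau>_def using x(1) pos by simp
        then have "f x \<in> Al r \<tau> x" unfolding Al_def using \<open>f x \<in> {1..r-1}\<close> by simp
        with x(2) show False by simp
      next
        case False
        then have fr: "f x = r" using fx by auto
        have r1: "r \<ge> 1" using fx by auto
        have all: "\<forall>j\<in>{1..r-1}. x \<in> \<tau> j"
        proof (rule ccontr)
          assume "\<not> (\<forall>j\<in>{1..r-1}. x \<in> \<tau> j)"
          then have "r \<in> Al r \<tau> x" unfolding Al_def by auto
          with x(2) fr show False by simp
        qed
        have posj: "0 < a j \<bullet> x + b j" if j: "j \<in> {1..r-1}" for j
          using all j unfolding \<tau>_def by auto
        have rn: "r \<notin> {1..r-1}" using r1 by auto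
        have "{1..r} = insert r {1..r-1}" using r1 by auto
        then have "(\<Sum>j\<in>{1..r}. a j \<bullet> x + b j) = (a r \<bullet> x + b r) + (\<Sum>j\<in>{1..r-1}. a j \<bullet> x + b j)"
          using rn by simp
        moreover have "(\<Sum>j\<in>{1..r-1}. a j \<bullet> x + b j) \<ge> 0" using posj
          by (intro sum_nonneg) (simp add: less_imp_le)
        ultimately show False using hsum[of x] pos fr by simp
      qed
    qed
    then show "x \<in> {x\<in>S. a (f x) \<bullet> x + b (f x) \<le> 0}" using x(1) by simp
  qed
  have "card {x\<in>S. f x \<notin> Al r \<tau> x} \<le> 1"
    using ab(3) card_mono[OF _ sub] fin by simp
  then show "f \<in> (\<Union>\<tau>\<in>{1..r-1} \<rightarrow>\<^sub>E traces S. {f \<in> S \<rightarrow>\<^sub>E {1..r}. card {x\<in>S. f x \<notin> Al r \<tau> x} \<le> 1})"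
    using \<tau>T fE by blast
qed

lemma q_bound:
  assumes r1: "r \<ge> 1" and nr: "n \<ge> r"
  shows "(real (r - 1) ^ n + real n * real (r - 1) ^ (n - 1)) / real r ^ n
         \<le> exp (- 2 * (real n - real r)^2 / (real n * real r ^ 2))"
proof -
  define p where "p = 1 / real r"
  have n0: "n > 0" using r1 nr by simp
  have p01: "p \<in> {0..1}" unfolding p_def using r1 by auto
  interpret binomial_distribution n p by unfold_locales (rule p01)
  define \<epsilon> where "\<epsilon> = real n / real r - 1"
  have e0: "\<epsilon> \<ge> 0" unfolding \<epsilon>_def using r1 nr by (simp add: field_simps)
  have H: "measure_pmf.prob (binomial_pmf n p) {x. real x \<le> real n * p - \<epsilon>} \<le> exp (- 2 * \<epsilon>\<^sup>2 / real n)"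
    by (rule prob_le[OF n0 e0])
  have set: "{x. real x \<le> real n * p - \<epsilon>} = {0, 1::nat}"
  proof -
    have "real n * p - \<epsilon> = 1" unfolding p_def \<epsilon>_def by simp
    then show ?thesis by auto
  qed
  have "measure_pmf.prob (binomial_pmf n p) {0, 1::nat} = pmf (binomial_pmf n p) 0 + pmf (binomial_pmf n p) 1"
    by (simp add: measure_measure_pmf_finite)
  also have "\<dots> = (1 - p) ^ n + real n * p * (1 - p) ^ (n - 1)"
    using p01 by (simp add: pmf_binomial)
  also have "\<dots> = (real (r - 1) ^ n + real n * real (r - 1) ^ (n - 1)) / real r ^ n"
  proof -
    have omp: "1 - p = real (r - 1) / real r" unfolding p_def using r1 by (simp add: of_nat_diff field_simps)
    have rn: "real r ^ n = real r * real r ^ (n - 1)" using n0 by (cases n) auto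
    show ?thesis unfolding omp p_def using r1 rn by (simp add: power_divide field_simps)
  qed
  finally have q: "measure_pmf.prob (binomial_pmf n p) {0, 1::nat} = (real (r - 1) ^ n + real n * real (r - 1) ^ (n - 1)) / real r ^ n" .
  have ex: "- 2 * \<epsilon>\<^sup>2 / real n = - 2 * (real n - real r)^2 / (real n * real r ^ 2)"
  proof -
    have e: "\<epsilon> = (real n - real r) / real r" unfolding \<epsilon>_def using r1 by (simp add: field_simps)
    show ?thesis unfolding e power_divide by (simp add: mult.commute)
  qed
  show ?thesis using H unfolding set q ex .
qed

lemma exp_bound_small:
  assumes r2: "r \<ge> 2" and n0: "n > 0" and nr: "n < r" and D2: "D \<ge> 2"
  shows "1 \<le> real r ^ D * real n ^ D * exp (- 2 * (real n - real r)^2 / (real n * real r ^ 2))"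
proof -
  define E where "E = 2 * (real n - real r)^2 / (real n * real r ^ 2)"
  have "real r ^ 2 \<le> real r ^ D" using r2 D2 by (intro power_increasing) auto
  moreover have "1 \<le> real n ^ D" using n0 by simp
  moreover have "real r ^ D * 1 \<le> real r ^ D * real n ^ D"
    using \<open>1 \<le> real n ^ D\<close> by (intro mult_left_mono) auto
  ultimately have rD: "real r ^ 2 \<le> real r ^ D * real n ^ D" by simp
  have "exp E \<le> real r ^ 2"
  proof (cases "r = 2")
    case True
    then have "n = 1" using nr n0 by simp
    then have "E = 1/2" unfolding E_def using True by simp
    then have "exp E \<le> exp 1" by simp
    also have "\<dots> < 272/100" by (rule e_less_272)
    finally show ?thesis using True by simp
  next
    case False
    then have r3: "r \<ge> 3" using r2 by simp
    have "(real r - real n)^2 \<le> real r ^ 2" using nr n0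
      by (intro power_mono) auto
    then have "(real n - real r)^2 \<le> real r ^ 2" by (simp add: power2_commute)
    moreover have "real n * real r ^ 2 \<ge> 1 * real r ^ 2" using n0 by (intro mult_right_mono) auto
    ultimately have le1: "(real n - real r)^2 \<le> real n * real r ^ 2" by linarith
    have pos: "real n * real r ^ 2 > 0" using n0 r3 by simp
    have "(real n - real r)^2 / (real n * real r ^ 2) \<le> 1" using le1 pos by (simp add: divide_le_eq)
    then have "E \<le> 2" unfolding E_def by simp
    then have "exp E \<le> exp 2" by simp
    also have "exp (2::real) = exp 1 * exp 1" by (simp add: exp_add[symmetric])
    also have "\<dots> \<le> (272/100) * (272/100)" using e_less_272 by (intro mult_mono) auto
    also have "\<dots> \<le> real r ^ 2" using r3
    proof -
      have "(3::real) ^ 2 \<le> real r ^ 2" using r3 by (intro power_mono) auto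
      then show ?thesis by simp
    qed
    finally show ?thesis .
  qed
  then have "exp E \<le> real r ^ D * real n ^ D" using rD by linarith
  then have "1 \<le> real r ^ D * real n ^ D / exp E" by simp
  then show ?thesis unfolding E_def by (simp add: exp_minus field_simps)
qed

lemma final_ineq:
  fixes CB T n r d :: nat
  assumes n0: "n > 0" and r0: "r > 0" and d0: "d > 0"
    and cB: "CB \<le> T ^ (r - 1) * ((r - 1) ^ n + n * (r - 1) ^ (n - 1))"
    and cT: "T \<le> (n + 1) ^ (d + 1)" and cBF: "CB \<le> r ^ n"
  shows "real CB / real r ^ n \<le> real r ^ ((r - 1) * (d + 1)) * real n ^ ((r - 1) * (d + 1))
          * exp (- 2 * (real n - real r)^2 / (real n * real r ^ 2))"
proof -
  let ?X = "real r ^ ((r - 1) * (d + 1)) * real n ^ ((r - 1) * (d + 1)) * exp (- 2 * (real n - real r)^2 / (real n * real r ^ 2))"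
  have X0: "?X \<ge> 0" by simp
  consider "r = 1" | "r \<ge> 2" "n \<ge> r" | "r \<ge> 2" "n < r" using r0 by linarith
  then show ?thesis
  proof cases
    case 1
    show ?thesis
    proof (cases "n = 1")
      case True
      then have "CB \<le> 1" using cB 1 by simp
      then show ?thesis using True 1 by simp
    next
      case False
      then have "n \<ge> 2" using n0 by simp
      then have "CB = 0" using cB 1 by (simp add: power_0_left)
      then show ?thesis using X0 by simp
    qed
  next
    case 2
    define D where "D = (r - 1) * (d + 1)"
    define A where "A = real (T ^ (r - 1))"
    define B where "B = real ((r - 1) ^ n + n * (r - 1) ^ (n - 1))"
    have h: "real CB \<le> A * B" unfolding A_def B_def
      using of_nat_mono[OF cB] by simp
    have "real CB / real r ^ n \<le> (A * B) / real r ^ n" by (rule divide_right_mono[OF h]) simp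
    also have "\<dots> = A * (B / real r ^ n)" by simp
    finally have "real CB / real r ^ n \<le> real (T ^ (r - 1)) * (real ((r - 1) ^ n + n * (r - 1) ^ (n - 1)) / real r ^ n)"
      unfolding A_def B_def .
    note s1 = this
    have s2: "real ((r - 1) ^ n + n * (r - 1) ^ (n - 1)) / real r ^ n \<le> exp (- 2 * (real n - real r)^2 / (real n * real r ^ 2))"
      using q_bound[of r n] 2 by simp
    have s3: "real (T ^ (r - 1)) \<le> real r ^ D * real n ^ D"
    proof -
      have "T ^ (r - 1) \<le> ((n + 1) ^ (d + 1)) ^ (r - 1)" using cT by (rule power_mono) simp
      also have "\<dots> = (n + 1) ^ D" unfolding D_def by (simp only: power_mult[symmetric] mult.commute)
      also have "\<dots> \<le> (r * n) ^ D"
      proof (rule power_mono)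
        have "n + 1 \<le> 2 * n" using n0 by simp
        also have "2 * n \<le> r * n" using 2 by (intro mult_le_mono1) simp
        finally show "n + 1 \<le> r * n" .
      qed simp
      finally have "T ^ (r - 1) \<le> (r * n) ^ D" .
      then have "real (T ^ (r - 1)) \<le> real ((r * n) ^ D)" by (rule of_nat_mono)
      then show ?thesis by (simp add: power_mult_distrib)
    qed
    have "real (T ^ (r - 1)) * (real ((r - 1) ^ n + n * (r - 1) ^ (n - 1)) / real r ^ n)
        \<le> (real r ^ D * real n ^ D) * exp (- 2 * (real n - real r)^2 / (real n * real r ^ 2))"
      by (rule mult_mono[OF s3 s2]) auto
    with s1 show ?thesis unfolding D_def by linarith
  next
    case 3
    have "real CB / real r ^ n \<le> 1"
    proof -
      have "real CB \<le> real (r ^ n)" by (rule of_nat_mono[OF cBF])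
      then have "real CB \<le> real r ^ n" by simp
      then show ?thesis using r0 by simp
    qed
    also have "1 \<le> ?X"
    proof (rule exp_bound_small[OF 3(1) n0 3(2)])
      have "1 \<le> r - 1" using 3 by simp
      moreover have "2 \<le> d + 1" using d0 by simp
      ultimately have "1 * 2 \<le> (r - 1) * (d + 1)" by (rule mult_le_mono)
      then show "2 \<le> (r - 1) * (d + 1)" by simp
    qed
    finally show ?thesis .
  qed
qed

theorem theorem1p7:
  fixes S :: "(real ^ 'd) set" and n r d :: nat
  assumes "n > 0" and "r > 0" and "d > 0" and "CARD('d) = d"
    and "finite S" and "card S = n"
  shows "real (card {f \<in> S \<rightarrow>\<^sub>E {1..r}.
            tverberg_partition S r (label_partition S r f) \<and>
            tverberg_degree S r (label_partition S r f) = n * (r - 1)}) / real r ^ n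
         \<ge> 1 - real r ^ ((r - 1) * (d + 1)) * real n ^ ((r - 1) * (d + 1))
               * exp (- 2 * (real n - real r)^2 / (real n * real r ^ 2))"
proof -
  note n0 = assms(1) and r0 = assms(2) and d0 = assms(3) and cd = assms(4) and fin = assms(5) and cS = assms(6)
  define F where "F = S \<rightarrow>\<^sub>E {1..r::nat}"
  define Good where "Good = {f \<in> S \<rightarrow>\<^sub>E {1..r}.
            tverberg_partition S r (label_partition S r f) \<and>
            tverberg_degree S r (label_partition S r f) = n * (r - 1)}"
  define Bad where "Bad = {f \<in> S \<rightarrow>\<^sub>E {1..r}. bad_cert S r f}"
  have finF: "finite F" unfolding F_def using fin by (intro finite_PiE) auto
  have cF: "card F = r ^ n" unfolding F_def using fin cS by (simp add: card_PiE)
  have BF: "Bad \<subseteq> F" unfolding Bad_def F_def by auto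
  have GF: "Good \<subseteq> F" unfolding Good_def F_def by auto
  have FBG: "F - Bad \<subseteq> Good"
  proof
    fix f assume "f \<in> F - Bad"
    then have fE: "f \<in> S \<rightarrow>\<^sub>E {1..r}" and nb: "\<not> bad_cert S r f" unfolding F_def Bad_def by auto
    from good[OF fin fE nb] cS show "f \<in> Good" unfolding Good_def using fE by simp
  qed
  have cG: "card F - card Bad \<le> card Good"
  proof -
    have "card (F - Bad) = card F - card Bad" using BF finF by (simp add: card_Diff_subset finite_subset)
    moreover have "card (F - Bad) \<le> card Good" using FBG finite_subset[OF GF finF] by (rule card_mono[rotated])
    ultimately show ?thesis by simp
  qed
  have cBF: "card Bad \<le> r ^ n" using card_mono[OF finF BF] cF by simp
  define T where "T = card (traces S)"
  have "traces S \<subseteq> Pow S" unfolding traces_def by auto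
  then have finT: "finite (traces S)" using fin finite_subset by blast
  have cT: "T \<le> (n + 1) ^ (d + 1)" unfolding T_def using card_traces[OF fin] cS cd by simp
  have cB: "card Bad \<le> T ^ (r - 1) * ((r - 1) ^ n + n * (r - 1) ^ (n - 1))"
  proof -
    let ?I = "{1..r-1} \<rightarrow>\<^sub>E traces S"
    have finI: "finite ?I" using finT by (intro finite_PiE) auto
    have "card Bad \<le> card (\<Union>\<tau>\<in>?I. {f \<in> S \<rightarrow>\<^sub>E {1..r}. card {x\<in>S. f x \<notin> Al r \<tau> x} \<le> 1})"
      unfolding Bad_def using bad_sub[OF fin] finI fin
      by (intro card_mono) (auto intro!: finite_PiE)
    also have "\<dots> \<le> (\<Sum>\<tau>\<in>?I. card {f \<in> S \<rightarrow>\<^sub>E {1..r}. card {x\<in>S. f x \<notin> Al r \<tau> x} \<le> 1})"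
      by (rule card_UN_le[OF finI])
    also have "\<dots> \<le> (\<Sum>\<tau>\<in>?I. (r - 1) ^ n + n * (r - 1) ^ (n - 1))"
    proof (rule sum_mono)
      fix \<tau> assume "\<tau> \<in> ?I"
      show "card {f \<in> S \<rightarrow>\<^sub>E {1..r}. card {x\<in>S. f x \<notin> Al r \<tau> x} \<le> 1} \<le> (r - 1) ^ n + n * (r - 1) ^ (n - 1)"
        using badA_card[OF fin, of "Al r \<tau>" r] Al_props[of r \<tau>] cS by simp
    qed
    also have "\<dots> = card ?I * ((r - 1) ^ n + n * (r - 1) ^ (n - 1))" by simp
    also have "card ?I = T ^ (r - 1)" unfolding T_def by (simp add: card_PiE)
    finally show ?thesis .
  qed
  have fin_ineq: "real (card Bad) / real r ^ n \<le> real r ^ ((r - 1) * (d + 1)) * real n ^ ((r - 1) * (d + 1))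
          * exp (- 2 * (real n - real r)^2 / (real n * real r ^ 2))"
    by (rule final_ineq[OF n0 r0 d0 cB cT cBF])
  have rn0: "real r ^ n > 0" using r0 by simp
  have "real (card Good) \<ge> real r ^ n - real (card Bad)"
  proof -
    have "real (card F - card Bad) \<le> real (card Good)" using cG by (rule of_nat_mono)
    moreover have "real (card F - card Bad) = real r ^ n - real (card Bad)" using cBF cF by (simp add: of_nat_diff)
    ultimately show ?thesis by simp
  qed
  then have "(real r ^ n - real (card Bad)) / real r ^ n \<le> real (card Good) / real r ^ n"
    using rn0 by (intro divide_right_mono) auto
  moreover have "(real r ^ n - real (card Bad)) / real r ^ n = 1 - real (card Bad) / real r ^ n"
    using rn0 by (simp add: diff_divide_distrib)
  ultimately have "real (card Good) / real r ^ n \<ge> 1 - real (card Bad) / real r ^ n" by simp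
  with fin_ineq show ?thesis unfolding Good_def by linarith
qed


end
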